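(* Let $\varphi$ be a rule defined on $\mathcal{E}_{\mathcal{SP}}$. Then $\varphi$ satisfies own-peak-onliness, efficiency, the equal division guarantee, and not obvious manipulability (NOM) if and only if $\varphi$ is a simple rule.
   Context: Let $N=\{1,\dots,n\}$ be a finite set of agents. A preference $R_i$ is a continuous complete preorder on $\mathbb{R}_+\cup\{\infty\}$, with strict part $P_i$ and indifference $I_i$. Its peak is $p(R_i)=\{x: xR_iy \text{ for all } y\in\mathbb{R}_+\cup\{\infty\}\}$; when it is a singleton we identify it with its element. $R_i$ is single-peaked if $p(R_i)$ is a singleton and for all $x,x'\in\mathbb{R}_+$, $xP_ix'$ whenever $x'<x\le p(R_i)$ or $p(R_i)\le x<x'$. $\mathcal{SP}$ is the set of single-peaked preferences. An economy is a pair $(R,\Omega)$ with $R=(R_j)_{j\in N}\in\mathcal{SP}^n$ and $\Omega>0$; $\mathcal{E}_{\mathcal{SP}}$ is the set of all economies. A rule is a map $\varphi:\mathcal{E}_{\mathcal{SP}}\to\mathbb{R}^n_+$ with $\sum_{j\in N}\varphi_j(R,\Omega)=\Omega$ for every economy. Properties: Efficiency: for no economy is there $x\in\mathbb{R}^n_+$ with $\sum_j x_j=\Omega$, $x_iR_i\varphi_i(R,\Omega)$ for all $i$ and $x_iP_i\varphi_i(R,\Omega)$ for some $i$. Own-peak-onliness: if $p(R_i')=p(R_i)$ then $\varphi_i(R,\Omega)=\varphi_i(R_i',R_{-i},\Omega)$. Equal division guarantee: for every economy $(R,\Omega)$ and $i$ with $p(R_i)=\Omega/n$, $\varphi_i(R,\Omega)\,I_i\,\Omega/n$.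 Option set: $O^\varphi(R_i,\Omega)=\{\varphi_i(R_i,R_{-i},\Omega): R_{-i}\in\mathcal{SP}^{n-1}\}$. $R_i'$ is a manipulation of $\varphi$ at $(R_i,\Omega)$ if $\varphi_i(R_i',R_{-i},\Omega)P_i\varphi_i(R_i,R_{-i},\Omega)$ for some $R_{-i}$; it is an obvious manipulation if moreover for every $x'\in O^\varphi(R_i',\Omega)$ there is $x\in O^\varphi(R_i,\Omega)$ with $x'P_ix$. $\varphi$ is NOM if no agent $i$ has an obvious manipulation at any $(R_i,\Omega)$. Simple rules: for an economy let $z(R,\Omega)=\sum_j p(R_j)-\Omega$. Agent $i$ is simple if either $z(R,\Omega)\ge0$ and $p(R_i)<\Omega/n$, or $z(R,\Omega)\le 0$ and $p(R_i)>\Omega/n$; $N^+(R,\Omega)$ is the set of simple agents and $N^-(R,\Omega)=N\setminus N^+(R,\Omega)$. Let $E(R,\Omega)=\left|\Omega-\left(\sum_{j\in N^+}p(R_j)+|N^-|\frac{\Omega}{n}\right)\right|$. An own-peak-only rule $\varphi$ is simple if for every economy and every $i$: $\varphi_i(R,\Omega)=p(R_i)$ if $i\in N^+(R,\Omega)$; $\varphi_i(R,\Omega)=\frac{\Omega}{n}+\nu_i$ if $i\in N^-(R,\Omega)$ and $z(R,\Omega)\ge0$; $\varphi_i(R,\Omega)=\frac{\Omega}{n}-\nu_i$ if $i\in N^-(R,\Omega)$ and $z(R,\Omega)\le0$; where the numbers $\nu_i=\nu_i(R,\Omega)$ satisfy $0\le\nu_i\le|p(R_i)-\frac{\Omega}{n}|$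 and $\sum_{j\in N^-(R,\Omega)}\nu_j=E(R,\Omega)$. *)

theory Defs
  imports "HOL-Analysis.Analysis"
begin

text \<open>Consumption space R_+ \<union> {\<infinity>}, represented inside the extended reals.\<close>
definition Xsp :: "ereal set" where
  "Xsp = {x. 0 \<le> x}"

type_synonym pref = "ereal \<Rightarrow> ereal \<Rightarrow> bool"

definition strict :: "pref \<Rightarrow> ereal \<Rightarrow> ereal \<Rightarrow> bool" where
  "strict R x y \<longleftrightarrow> R x y \<and> \<not> R y x"

definition indiff :: "pref \<Rightarrow> ereal \<Rightarrow> ereal \<Rightarrow> bool" where
  "indiff R x y \<longleftrightarrow> R x y \<and> R y x"

definition continuous_complete_preorder :: "pref \<Rightarrow> bool" where
  "continuous_complete_preorder R \<longleftrightarrow>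
     (\<forall>x y. R x y \<longrightarrow> x \<in> Xsp \<and> y \<in> Xsp) \<and>
     (\<forall>x\<in>Xsp. R x x) \<and>
     (\<forall>x\<in>Xsp. \<forall>y\<in>Xsp. \<forall>z\<in>Xsp. R x y \<longrightarrow> R y z \<longrightarrow> R x z) \<and>
     (\<forall>x\<in>Xsp. \<forall>y\<in>Xsp. R x y \<or> R y x) \<and>
     (\<forall>x\<in>Xsp. closedin (top_of_set Xsp) {y\<in>Xsp. R y x} \<and>
                closedin (top_of_set Xsp) {y\<in>Xsp. R x y})"

definition peak_set :: "pref \<Rightarrow> ereal set" where
  "peak_set R = {x\<in>Xsp. \<forall>y\<in>Xsp. R x y}"

definition peak :: "pref \<Rightarrow> ereal" where
  "peak R = (THE p. peak_set R = {p})"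

definition single_peaked :: "pref \<Rightarrow> bool" where
  "single_peaked R \<longleftrightarrow> continuous_complete_preorder R \<and>
     (\<exists>p. peak_set R = {p}) \<and>
     (\<forall>x x' :: real. 0 \<le> x \<longrightarrow> 0 \<le> x' \<longrightarrow>
        ((x' < x \<and> ereal x \<le> peak R) \<or> (peak R \<le> ereal x \<and> x < x')) \<longrightarrow>
        strict R (ereal x) (ereal x'))"

text \<open>Agents are the elements of a finite type 'n; n = CARD('n).
  A rule maps a profile and an amount \<Omega> to an allocation.\<close>
type_synonym 'n rule = "('n \<Rightarrow> pref) \<Rightarrow> real \<Rightarrow> 'n \<Rightarrow> real"

definition economy :: "('n \<Rightarrow> pref) \<Rightarrow> real \<Rightarrow> bool" where
  "economy R \<Omega> \<longleftrightarrow> (\<forall>j. single_peaked (R j)) \<and> \<Omega> > 0"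

definition is_rule :: "('n::finite) rule \<Rightarrow> bool" where
  "is_rule \<phi> \<longleftrightarrow> (\<forall>R \<Omega>. economy R \<Omega> \<longrightarrow>
      (\<forall>i. \<phi> R \<Omega> i \<ge> 0) \<and> (\<Sum>j\<in>UNIV. \<phi> R \<Omega> j) = \<Omega>)"

definition efficient :: "('n::finite) rule \<Rightarrow> bool" where
  "efficient \<phi> \<longleftrightarrow> (\<forall>R \<Omega>. economy R \<Omega> \<longrightarrow>
      \<not> (\<exists>x :: 'n \<Rightarrow> real. (\<forall>j. x j \<ge> 0) \<and> (\<Sum>j\<in>UNIV. x j) = \<Omega> \<and>
            (\<forall>i. R i (ereal (x i)) (ereal (\<phi> R \<Omega> i))) \<and>
            (\<exists>i. strict (R i) (ereal (x i)) (ereal (\<phi> R \<Omega> i)))))"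

definition own_peak_only :: "('n::finite) rule \<Rightarrow> bool" where
  "own_peak_only \<phi> \<longleftrightarrow> (\<forall>R \<Omega> i Ri'. economy R \<Omega> \<longrightarrow> single_peaked Ri' \<longrightarrow>
      peak Ri' = peak (R i) \<longrightarrow> \<phi> R \<Omega> i = \<phi> (R(i := Ri')) \<Omega> i)"

definition equal_division_guarantee :: "('n::finite) rule \<Rightarrow> bool" where
  "equal_division_guarantee \<phi> \<longleftrightarrow> (\<forall>R \<Omega> i. economy R \<Omega> \<longrightarrow>
      peak (R i) = ereal (\<Omega> / real CARD('n)) \<longrightarrow>
      indiff (R i) (ereal (\<phi> R \<Omega> i)) (ereal (\<Omega> / real CARD('n))))"

definition option_set :: "('n::finite) rule \<Rightarrow> 'n \<Rightarrow> pref \<Rightarrow> real \<Rightarrow> real set" where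
  "option_set \<phi> i Ri \<Omega> = {\<phi> R \<Omega> i | R. (\<forall>j. single_peaked (R j)) \<and> R i = Ri}"

definition manipulation :: "('n::finite) rule \<Rightarrow> 'n \<Rightarrow> pref \<Rightarrow> real \<Rightarrow> pref \<Rightarrow> bool" where
  "manipulation \<phi> i Ri \<Omega> Ri' \<longleftrightarrow>
     (\<exists>R. (\<forall>j. single_peaked (R j)) \<and>
          strict Ri (ereal (\<phi> (R(i := Ri')) \<Omega> i)) (ereal (\<phi> (R(i := Ri)) \<Omega> i)))"

definition obvious_manipulation :: "('n::finite) rule \<Rightarrow> 'n \<Rightarrow> pref \<Rightarrow> real \<Rightarrow> pref \<Rightarrow> bool" where
  "obvious_manipulation \<phi> i Ri \<Omega> Ri' \<longleftrightarrow>
     manipulation \<phi> i Ri \<Omega> Ri' \<and>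
     (\<forall>x'\<in>option_set \<phi> i Ri' \<Omega>. \<exists>x\<in>option_set \<phi> i Ri \<Omega>. strict Ri (ereal x') (ereal x))"

definition NOM :: "('n::finite) rule \<Rightarrow> bool" where
  "NOM \<phi> \<longleftrightarrow> (\<forall>i Ri Ri' \<Omega>. single_peaked Ri \<longrightarrow> single_peaked Ri' \<longrightarrow> \<Omega> > 0 \<longrightarrow>
      \<not> obvious_manipulation \<phi> i Ri \<Omega> Ri')"

definition zexc :: "('n::finite \<Rightarrow> pref) \<Rightarrow> real \<Rightarrow> ereal" where
  "zexc R \<Omega> = (\<Sum>j\<in>UNIV. peak (R j)) - ereal \<Omega>"

definition simple_agents :: "('n::finite \<Rightarrow> pref) \<Rightarrow> real \<Rightarrow> 'n set" where
  "simple_agents R \<Omega> = {i. (zexc R \<Omega> \<ge> 0 \<and> peak (R i) < ereal (\<Omega> / real CARD('n))) \<or>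
                          (zexc R \<Omega> \<le> 0 \<and> peak (R i) > ereal (\<Omega> / real CARD('n)))}"

definition Eexc :: "('n::finite \<Rightarrow> pref) \<Rightarrow> real \<Rightarrow> ereal" where
  "Eexc R \<Omega> = \<bar>ereal \<Omega> - ((\<Sum>j\<in>simple_agents R \<Omega>. peak (R j)) +
       ereal (real (card (UNIV - simple_agents R \<Omega>)) * (\<Omega> / real CARD('n))))\<bar>"

definition simple_rule :: "('n::finite) rule \<Rightarrow> bool" where
  "simple_rule \<phi> \<longleftrightarrow> own_peak_only \<phi> \<and>
    (\<forall>R \<Omega>. economy R \<Omega> \<longrightarrow>
      (\<exists>\<nu> :: 'n \<Rightarrow> real.
         (\<forall>i\<in>UNIV - simple_agents R \<Omega>. 0 \<le> \<nu> i \<and>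
              ereal (\<nu> i) \<le> \<bar>peak (R i) - ereal (\<Omega> / real CARD('n))\<bar>) \<and>
         ereal (\<Sum>j\<in>UNIV - simple_agents R \<Omega>. \<nu> j) = Eexc R \<Omega> \<and>
         (\<forall>i. (i \<in> simple_agents R \<Omega> \<longrightarrow> ereal (\<phi> R \<Omega> i) = peak (R i)) \<and>
              (i \<notin> simple_agents R \<Omega> \<and> zexc R \<Omega> \<ge> 0 \<longrightarrow>
                  \<phi> R \<Omega> i = \<Omega> / real CARD('n) + \<nu> i) \<and>
              (i \<notin> simple_agents R \<Omega> \<and> zexc R \<Omega> \<le> 0 \<longrightarrow>
                  \<phi> R \<Omega> i = \<Omega> / real CARD('n) - \<nu> i))))"

end

theory Submission
  imports Defs
begin

definition dd :: "real \<Rightarrow> real \<Rightarrow> real \<Rightarrow> ereal \<Rightarrow> ereal" where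
  "dd a b p x = (if x = \<infinity> then \<infinity> else if x \<le> ereal p then ereal (a * (p - real_of_ereal x))
      else ereal (b * (real_of_ereal x - p)))"

definition mk :: "real \<Rightarrow> real \<Rightarrow> real \<Rightarrow> pref" where
  "mk a b p x y = (x \<in> Xsp \<and> y \<in> Xsp \<and> dd a b p x \<le> dd a b p y)"

lemma dd_real: "dd a b p (ereal r) = ereal (if r \<le> p then a * (p - r) else b * (r - p))"
  by (simp add: dd_def)

lemma Xsp_cases: "x \<in> Xsp \<Longrightarrow> x = \<infinity> \<or> (\<exists>r. x = ereal r \<and> 0 \<le> r)"
  unfolding Xsp_def by (cases x) auto

lemma dd_nonneg: "a > 0 \<Longrightarrow> b > 0 \<Longrightarrow> x \<in> Xsp \<Longrightarrow> dd a b p x \<ge> 0"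
  using Xsp_cases[of x] by (auto simp: dd_real dd_def)

lemma set1:
  assumes a: "a > 0" and b: "b > 0" and s: "s \<ge> 0"
  shows "{y\<in>Xsp. dd a b p y \<le> ereal s} = Xsp \<inter> {ereal (p - s/a) .. ereal (p + s/b)}"
proof -
  have "dd a b p y \<le> ereal s \<longleftrightarrow> ereal (p - s/a) \<le> y \<and> y \<le> ereal (p + s/b)" if "y \<in> Xsp" for y
  proof (cases y)
    case (real r)
    have m: "(r \<le> p \<longrightarrow> a*r \<le> a*p \<and> b*r \<le> b*p) \<and> (p \<le> r \<longrightarrow> a*p \<le> a*r \<and> b*p \<le> b*r)"
      using a b by simp
    have "(if r \<le> p then a * (p - r) else b * (r - p)) \<le> s \<longleftrightarrow> p - s/a \<le> r \<and> r \<le> p + s/b"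
    proof -
      have d1: "p - s/a \<le> r \<longleftrightarrow> a*(p-r) \<le> s" using a by (simp add: field_simps)
      have d2: "r \<le> p + s/b \<longleftrightarrow> b*(r-p) \<le> s" using b by (simp add: field_simps)
      show ?thesis unfolding d1 d2 using m s by (auto simp: algebra_simps)
    qed
    then show ?thesis using real by (simp add: dd_real)
  qed (use that in \<open>auto simp: Xsp_def dd_def\<close>)
  then show ?thesis by auto
qed

lemma set2:
  assumes a: "a > 0" and b: "b > 0" and s: "s \<ge> 0"
  shows "{y\<in>Xsp. ereal s \<le> dd a b p y} = Xsp \<inter> ({.. ereal (p - s/a)} \<union> {ereal (p + s/b) ..})"
proof -
  have "ereal s \<le> dd a b p y \<longleftrightarrow> y \<le> ereal (p - s/a) \<or> ereal (p + s/b) \<le> y" if "y \<in> Xsp" for y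
  proof (cases y)
    case (real r)
    have m: "(r \<le> p \<longrightarrow> a*r \<le> a*p \<and> b*r \<le> b*p) \<and> (p \<le> r \<longrightarrow> a*p \<le> a*r \<and> b*p \<le> b*r)"
      using a b by simp
    have "s \<le> (if r \<le> p then a * (p - r) else b * (r - p)) \<longleftrightarrow> r \<le> p - s/a \<or> p + s/b \<le> r"
    proof -
      have d1: "r \<le> p - s/a \<longleftrightarrow> s \<le> a*(p-r)" using a by (simp add: field_simps)
      have d2: "p + s/b \<le> r \<longleftrightarrow> s \<le> b*(r-p)" using b by (simp add: field_simps)
      show ?thesis unfolding d1 d2 using m s by (auto simp: algebra_simps)
    qed
    then show ?thesis using real by (simp add: dd_real)
  qed (use that in \<open>auto simp: Xsp_def dd_def\<close>)
  then show ?thesis by auto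
qed

lemma mk_sp:
  assumes a: "a > 0" and b: "b > 0" and p: "p \<ge> 0"
  shows "single_peaked (mk a b p)" "peak (mk a b p) = ereal p"
proof -
  let ?R = "mk a b p"
  have ps: "peak_set ?R = {ereal p}"
  proof -
    have "x = ereal p" if "x \<in> Xsp" "\<forall>y\<in>Xsp. dd a b p x \<le> dd a b p y" for x
    proof -
      have "dd a b p x \<le> 0" using that(2)[rule_format, of "ereal p"] p by (auto simp: Xsp_def dd_real zero_ereal_def)
      then show ?thesis using that(1) a b Xsp_cases[of x]
        by (auto simp: dd_real dd_def split: if_splits) (smt (verit) mult_pos_pos)+
    qed
    moreover have "dd a b p (ereal p) \<le> dd a b p y" if "y \<in> Xsp" for y
      using dd_nonneg[OF a b that] by (simp add: dd_real zero_ereal_def)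
    ultimately show ?thesis using p by (auto simp: peak_set_def mk_def Xsp_def)
  qed
  then show pk: "peak ?R = ereal p" by (simp add: peak_def)
  have cl: "closedin (top_of_set Xsp) {y\<in>Xsp. ?R y x} \<and> closedin (top_of_set Xsp) {y\<in>Xsp. ?R x y}"
    if x: "x \<in> Xsp" for x
  proof (cases "x = \<infinity>")
    case True
    have e1: "{y\<in>Xsp. ?R y x} = Xsp" using True x by (auto simp: mk_def dd_def)
    have e2: "{y\<in>Xsp. ?R x y} = Xsp \<inter> {\<infinity>}" using True x
      by (auto simp: mk_def dd_def split: if_splits)
    show ?thesis unfolding e1 e2 by (auto intro: closedin_closed_Int)
  next
    case False
    then obtain s where s: "dd a b p x = ereal s" "s \<ge> 0"
      using x Xsp_cases[of x] dd_nonneg[OF a b x] by (auto simp: dd_real)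
    have e1: "{y\<in>Xsp. ?R y x} = {y\<in>Xsp. dd a b p y \<le> ereal s}" using x s by (auto simp: mk_def)
    have e2: "{y\<in>Xsp. ?R x y} = {y\<in>Xsp. ereal s \<le> dd a b p y}" using x s by (auto simp: mk_def)
    show ?thesis unfolding e1 e2 set1[OF a b s(2)] set2[OF a b s(2)]
      by (auto intro!: closedin_closed_Int closed_Un)
  qed
  have ccp: "continuous_complete_preorder ?R"
    unfolding continuous_complete_preorder_def using cl
    by (auto simp: mk_def)
  show "single_peaked ?R"
    unfolding single_peaked_def pk
  proof (intro conjI allI impI)
    fix x x' :: real
    assume h: "0 \<le> x" "0 \<le> x'" "x' < x \<and> ereal x \<le> ereal p \<or> ereal p \<le> ereal x \<and> x < x'"
    then show "strict ?R (ereal x) (ereal x')"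
      using a b by (auto simp: strict_def mk_def Xsp_def dd_real mult_le_0_iff)
  qed (use ccp ps in auto)
qed

lemma sp_ps: "single_peaked R \<Longrightarrow> peak_set R = {peak R}"
proof -
  assume "single_peaked R"
  then obtain p where p: "peak_set R = {p}" unfolding single_peaked_def by blast
  then have "peak R = p" unfolding peak_def by (rule the_equality) (use p in auto)
  then show ?thesis using p by simp
qed

lemma sp_peak_nn: "single_peaked R \<Longrightarrow> 0 \<le> peak R"
proof -
  assume "single_peaked R"
  then have "peak R \<in> peak_set R" using sp_ps by blast
  then show ?thesis unfolding peak_set_def Xsp_def by blast
qed

lemma sp_ccp: "single_peaked R \<Longrightarrow> continuous_complete_preorder R"
  unfolding single_peaked_def by (rule conjunct1)

lemma sp_refl: "single_peaked R \<Longrightarrow> 0 \<le> x \<Longrightarrow> R x x"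
proof -
  assume "single_peaked R" "0 \<le> x"
  then have "\<forall>x\<in>Xsp. R x x" "x \<in> Xsp" using sp_ccp unfolding continuous_complete_preorder_def Xsp_def by blast+
  then show ?thesis by blast
qed

lemma sp_sp: "single_peaked R \<Longrightarrow> (\<forall>x x' :: real. 0 \<le> x \<longrightarrow> 0 \<le> x' \<longrightarrow>
        ((x' < x \<and> ereal x \<le> peak R) \<or> (peak R \<le> ereal x \<and> x < x')) \<longrightarrow>
        strict R (ereal x) (ereal x'))"
  unfolding single_peaked_def by (elim conjE)

lemma sp_strict1: "single_peaked R \<Longrightarrow> 0 \<le> x' \<Longrightarrow> x' < x \<Longrightarrow> ereal x \<le> peak R \<Longrightarrow>
    strict R (ereal x) (ereal x')"
proof -
  assume a: "single_peaked R" "0 \<le> x'" "x' < x" "ereal x \<le> peak R"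
  have "0 \<le> x" using a by linarith
  then show ?thesis using sp_sp[OF a(1)] a by blast
qed

lemma sp_strict2: "single_peaked R \<Longrightarrow> 0 \<le> x \<Longrightarrow> peak R \<le> ereal x \<Longrightarrow> x < x' \<Longrightarrow>
    strict R (ereal x) (ereal x')"
proof -
  assume a: "single_peaked R" "0 \<le> x" "peak R \<le> ereal x" "x < x'"
  have "0 \<le> x'" using a by linarith
  then show ?thesis using sp_sp[OF a(1)] a by blast
qed

lemma econ_upd: "economy R \<Omega> \<Longrightarrow> single_peaked Q \<Longrightarrow> economy (R(i:=Q)) \<Omega>"
  unfolding economy_def by auto

lemma rule_nn: "is_rule \<phi> \<Longrightarrow> economy R \<Omega> \<Longrightarrow> 0 \<le> \<phi> R \<Omega> i"
  unfolding is_rule_def by auto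

lemma rule_sum: "is_rule \<phi> \<Longrightarrow> economy R \<Omega> \<Longrightarrow> (\<Sum>j\<in>UNIV. \<phi> R \<Omega> j) = \<Omega>"
  unfolding is_rule_def by auto

lemma c_pos: "economy R \<Omega> \<Longrightarrow> \<Omega> / real CARD('n::finite) > 0"
  unfolding economy_def by auto

lemma edg_exact:
  fixes \<phi> :: "('n::finite) rule"
  assumes "is_rule \<phi>" "equal_division_guarantee \<phi>" "economy R \<Omega>"
    "peak (R i) = ereal (\<Omega> / real CARD('n))"
  shows "\<phi> R \<Omega> i = \<Omega> / real CARD('n)"
proof -
  define c where "c = \<Omega> / real CARD('n)"
  have sp: "single_peaked (R i)" using assms(3) by (auto simp: economy_def)
  have c0: "c > 0" using c_pos[OF assms(3)] by (simp add: c_def)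
  have ind: "indiff (R i) (ereal (\<phi> R \<Omega> i)) (ereal c)"
    using assms unfolding equal_division_guarantee_def c_def by auto
  have f0: "0 \<le> \<phi> R \<Omega> i" using rule_nn[OF assms(1,3)] .
  show ?thesis unfolding c_def[symmetric]
  proof (rule ccontr)
    assume "\<phi> R \<Omega> i \<noteq> c"
    then consider "\<phi> R \<Omega> i < c" | "\<phi> R \<Omega> i > c" by linarith
    then show False
    proof cases
      case 1
      then have "strict (R i) (ereal c) (ereal (\<phi> R \<Omega> i))"
        using sp_strict1[OF sp f0 1] assms(4) by (simp add: c_def)
      then show False using ind by (simp add: strict_def indiff_def)
    next
      case 2
      then have "strict (R i) (ereal c) (ereal (\<phi> R \<Omega> i))"
        using sp_strict2[OF sp _ _ 2] c0 assms(4) by (simp add: c_def)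
      then show False using ind by (simp add: strict_def indiff_def)
    qed
  qed
qed

lemma core:
  fixes \<phi> :: "('n::finite) rule"
  assumes rule: "is_rule \<phi>" and opo: "own_peak_only \<phi>" and edg: "equal_division_guarantee \<phi>"
    and nom: "NOM \<phi>" and econ: "economy R \<Omega>" and Q: "single_peaked Q" "peak Q = peak (R i)"
    and st: "strict Q (ereal (\<Omega> / real CARD('n))) (ereal (\<phi> R \<Omega> i))"
  shows False
proof -
  define c where "c = \<Omega> / real CARD('n)"
  have c0: "c > 0" using c_pos[OF econ] by (simp add: c_def)
  define R' where "R' = mk 1 1 c"
  have R': "single_peaked R'" "peak R' = ereal c" using mk_sp[of 1 1 c] c0 by (auto simp: R'_def)
  have h1: "\<phi> (R(i:=Q)) \<Omega> i = \<phi> R \<Omega> i"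
    using opo econ Q unfolding own_peak_only_def by metis
  have h2: "\<phi> (R(i:=R')) \<Omega> i = c"
    using edg_exact[OF rule edg econ_upd[OF econ R'(1)], of i] R' by (simp add: c_def)
  have allsp: "\<forall>j. single_peaked (R j)" using econ by (simp add: economy_def)
  have man: "manipulation \<phi> i Q \<Omega> R'"
    unfolding manipulation_def
  proof (rule exI[of _ R], intro conjI)
    show "\<forall>j. single_peaked (R j)" by (rule allsp)
    show "strict Q (ereal (\<phi> (R(i := R')) \<Omega> i)) (ereal (\<phi> (R(i := Q)) \<Omega> i))"
      unfolding h1 h2 using st by (simp add: c_def)
  qed
  have obv: "\<forall>x'\<in>option_set \<phi> i R' \<Omega>. \<exists>x\<in>option_set \<phi> i Q \<Omega>. strict Q (ereal x') (ereal x)"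
  proof
    fix x' assume "x' \<in> option_set \<phi> i R' \<Omega>"
    then obtain R2 where R2: "\<forall>j. single_peaked (R2 j)" "R2 i = R'" "x' = \<phi> R2 \<Omega> i"
      by (auto simp: option_set_def)
    have e2: "economy R2 \<Omega>" using R2 econ by (simp add: economy_def)
    have "x' = c" using edg_exact[OF rule edg e2, of i] R2 R' by (simp add: c_def)
    moreover have "\<phi> R \<Omega> i \<in> option_set \<phi> i Q \<Omega>"
      unfolding option_set_def using allsp Q h1 by (auto intro!: exI[of _ "R(i:=Q)"])
    ultimately show "\<exists>x\<in>option_set \<phi> i Q \<Omega>. strict Q (ereal x') (ereal x)"
      using st by (auto simp: c_def)
  qed
  have "\<Omega> > 0" using econ by (simp add: economy_def)
  then have "\<not> obvious_manipulation \<phi> i Q \<Omega> R'" using nom Q R' unfolding NOM_def by blast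
  then show False using man obv unfolding obvious_manipulation_def by blast
qed

lemma transfer:
  fixes \<phi> :: "('n::finite) rule"
  assumes rule: "is_rule \<phi>" and eff: "efficient \<phi>" and econ: "economy R \<Omega>"
    and ij: "i \<noteq> j" and e: "e > 0" "e \<le> \<phi> R \<Omega> i"
    and si: "strict (R i) (ereal (\<phi> R \<Omega> i - e)) (ereal (\<phi> R \<Omega> i))"
    and sj: "R j (ereal (\<phi> R \<Omega> j + e)) (ereal (\<phi> R \<Omega> j))"
  shows False
proof -
  define x where "x k = \<phi> R \<Omega> k + (if k = j then e else 0) - (if k = i then e else 0)" for k
  have sp: "\<And>k. single_peaked (R k)" using econ by (simp add: economy_def)
  have nn: "\<And>k. 0 \<le> \<phi> R \<Omega> k" using rule_nn[OF rule econ] .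
  have x0: "\<forall>k. x k \<ge> 0" using nn e ij by (auto simp: x_def)
  have "(\<Sum>k\<in>UNIV. x k) = (\<Sum>k\<in>UNIV. \<phi> R \<Omega> k) + e - e"
    unfolding x_def by (simp add: sum.distrib sum_subtractf)
  then have xs: "(\<Sum>k\<in>UNIV. x k) = \<Omega>" using rule_sum[OF rule econ] by simp
  have xR: "\<forall>k. R k (ereal (x k)) (ereal (\<phi> R \<Omega> k))"
  proof
    fix k show "R k (ereal (x k)) (ereal (\<phi> R \<Omega> k))"
    proof (cases "k = i")
      case True
      then have "x k = \<phi> R \<Omega> i - e" using ij by (simp add: x_def)
      then show ?thesis using si True by (simp add: strict_def)
    next
      case False
      show ?thesis
      proof (cases "k = j")
        case True
        then have "x k = \<phi> R \<Omega> j + e" using ij by (simp add: x_def)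
        then show ?thesis using sj True by simp
      next
        case False
        then have "x k = \<phi> R \<Omega> k" using \<open>k \<noteq> i\<close> by (simp add: x_def)
        then show ?thesis using sp_refl[OF sp[of k]] nn[of k] by simp
      qed
    qed
  qed
  have "x i = \<phi> R \<Omega> i - e" using ij by (simp add: x_def)
  then have "\<exists>k. strict (R k) (ereal (x k)) (ereal (\<phi> R \<Omega> k))"
    using si by (intro exI[of _ i]) simp
  moreover have H: "\<forall>R \<Omega>. economy R \<Omega> \<longrightarrow> \<not> (\<exists>x :: 'n \<Rightarrow> real. (\<forall>j. x j \<ge> 0) \<and> (\<Sum>j\<in>UNIV. x j) = \<Omega> \<and>
            (\<forall>i. R i (ereal (x i)) (ereal (\<phi> R \<Omega> i))) \<and>
            (\<exists>i. strict (R i) (ereal (x i)) (ereal (\<phi> R \<Omega> i))))"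
    using eff unfolding efficient_def .
  ultimately show False using x0 xs xR econ by blast
qed

lemma peak_real: "single_peaked R \<Longrightarrow> peak R \<noteq> \<infinity> \<Longrightarrow> peak R = ereal (real_of_ereal (peak R))"
  using sp_peak_nn[of R] by (cases "peak R") auto

lemma zexc_fin:
  fixes R :: "'n::finite \<Rightarrow> pref"
  assumes "economy R \<Omega>" "\<forall>j. peak (R j) \<noteq> \<infinity>"
  shows "zexc R \<Omega> = ereal ((\<Sum>j\<in>UNIV. real_of_ereal (peak (R j))) - \<Omega>)"
proof -
  have sp: "\<And>j. single_peaked (R j)" using assms by (simp add: economy_def)
  have "(\<Sum>j\<in>UNIV. peak (R j)) = (\<Sum>j\<in>UNIV. ereal (real_of_ereal (peak (R j))))"
    using peak_real[OF sp] assms(2) by (intro sum.cong) auto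
  then show ?thesis by (simp add: zexc_def)
qed

lemma zexc_le_fin:
  fixes R :: "'n::finite \<Rightarrow> pref"
  assumes "economy R \<Omega>" "zexc R \<Omega> \<le> 0"
  shows "peak (R j) \<noteq> \<infinity>"
proof
  assume "peak (R j) = \<infinity>"
  then have "(\<Sum>j\<in>UNIV. peak (R j)) = \<infinity>" by (auto simp: sum_Pinfty)
  then have "zexc R \<Omega> = \<infinity>" by (simp add: zexc_def)
  then show False using assms(2) by simp
qed

lemma eff_ge:
  fixes \<phi> :: "('n::finite) rule"
  assumes rule: "is_rule \<phi>" and eff: "efficient \<phi>" and econ: "economy R \<Omega>"
    and z: "zexc R \<Omega> \<ge> 0"
  shows "ereal (\<phi> R \<Omega> i) \<le> peak (R i)"
proof (rule ccontr)
  define f where "f = \<phi> R \<Omega>"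
  have sp: "\<And>k. single_peaked (R k)" using econ by (simp add: economy_def)
  have nn: "\<And>k. 0 \<le> f k" using rule_nn[OF rule econ] by (simp add: f_def)
  assume "\<not> ereal (\<phi> R \<Omega> i) \<le> peak (R i)"
  then have lt: "peak (R i) < ereal (f i)" by (simp add: f_def)
  then have "peak (R i) \<noteq> \<infinity>" by auto
  then have Pi: "peak (R i) = ereal (real_of_ereal (peak (R i)))"
    using peak_real[OF sp[of i]] by blast
  define pi where "pi = real_of_ereal (peak (R i))"
  have Pi': "peak (R i) = ereal pi" unfolding pi_def by (rule Pi)
  have pi0: "0 \<le> pi" using sp_peak_nn[OF sp[of i]] Pi' by simp
  have pilt: "pi < f i" using lt Pi' by simp
  have "\<exists>j. ereal (f j) < peak (R j)"
  proof (rule ccontr)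
    assume "\<not> ?thesis"
    then have le: "\<And>j. peak (R j) \<le> ereal (f j)" by (auto simp: not_less)
    then have fin: "\<forall>j. peak (R j) \<noteq> \<infinity>" by (metis ereal_infty_less_eq(1) ereal_less_eq(1) PInfty_neq_ereal(1))
    define q where "q j = real_of_ereal (peak (R j))" for j
    have "ereal ((\<Sum>j\<in>UNIV. q j) - \<Omega>) \<ge> 0" using zexc_fin[OF econ fin] z by (simp add: q_def)
    then have s1: "(\<Sum>j\<in>UNIV. q j) \<ge> \<Omega>" by simp
    have qle: "\<forall>j\<in>UNIV. q j \<le> f j" using le peak_real[OF sp] fin unfolding q_def
      by (metis ereal_less_eq(3))
    have "(\<Sum>j\<in>UNIV. q j) < (\<Sum>j\<in>UNIV. f j)"
      using qle pilt by (intro sum_strict_mono_ex1) (auto simp: q_def pi_def)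
    then show False using s1 rule_sum[OF rule econ] by (simp add: f_def)
  qed
  then obtain j where j: "ereal (f j) < peak (R j)" by blast
  have ij: "i \<noteq> j" using j lt by (metis order.asym)
  define e where "e = min (f i - pi) (if peak (R j) = \<infinity> then 1 else real_of_ereal (peak (R j)) - f j)"
  have "f j < real_of_ereal (peak (R j))" if "peak (R j) \<noteq> \<infinity>"
    using j that by (cases "peak (R j)") auto
  then have e0: "e > 0" using pilt unfolding e_def by auto
  have e1: "e \<le> f i - pi" by (simp add: e_def)
  have e2: "ereal (f j + e) \<le> peak (R j)"
  proof (cases "peak (R j) = \<infinity>")
    case True then show ?thesis by simp
  next
    case False
    then have "e \<le> real_of_ereal (peak (R j)) - f j" by (simp add: e_def)
    then show ?thesis using peak_real[OF sp[of j] False] by (metis add.commute ereal_less_eq(3) le_diff_eq)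
  qed
  have si: "strict (R i) (ereal (f i - e)) (ereal (f i))"
    using sp_strict2[OF sp[of i], of "f i - e" "f i"] e0 e1 pi0 Pi' by simp
  have sj: "R j (ereal (f j + e)) (ereal (f j))"
    using sp_strict1[OF sp[of j] nn[of j], of "f j + e"] e0 e2 by (simp add: strict_def)
  show False using transfer[OF rule eff econ ij e0 _ si[unfolded f_def] sj[unfolded f_def]] e1 pi0
    by (simp add: f_def)
qed

lemma eff_le:
  fixes \<phi> :: "('n::finite) rule"
  assumes rule: "is_rule \<phi>" and eff: "efficient \<phi>" and econ: "economy R \<Omega>"
    and z: "zexc R \<Omega> \<le> 0"
  shows "peak (R i) \<le> ereal (\<phi> R \<Omega> i)"
proof (rule ccontr)
  define f where "f = \<phi> R \<Omega>"
  have sp: "\<And>k. single_peaked (R k)" using econ by (simp add: economy_def)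
  have nn: "\<And>k. 0 \<le> f k" using rule_nn[OF rule econ] by (simp add: f_def)
  have fin: "\<forall>j. peak (R j) \<noteq> \<infinity>" using zexc_le_fin[OF econ z] by blast
  define q where "q j = real_of_ereal (peak (R j))" for j
  have Pq: "\<And>j. peak (R j) = ereal (q j)" using peak_real[OF sp] fin by (simp add: q_def)
  have q0: "\<And>j. 0 \<le> q j" using sp_peak_nn[OF sp] Pq by (metis ereal_less_eq(5))
  have s1: "(\<Sum>j\<in>UNIV. q j) \<le> \<Omega>" using zexc_fin[OF econ fin] z by (simp add: q_def)
  assume "\<not> peak (R i) \<le> ereal (\<phi> R \<Omega> i)"
  then have lt: "f i < q i" using Pq by (simp add: f_def)
  have "\<exists>j. q j < f j"
  proof (rule ccontr)
    assume "\<not> ?thesis"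
    then have le: "\<forall>j\<in>UNIV. f j \<le> q j" by (auto simp: not_less)
    have "(\<Sum>j\<in>UNIV. f j) < (\<Sum>j\<in>UNIV. q j)"
      using le lt by (intro sum_strict_mono_ex1) auto
    then show False using s1 rule_sum[OF rule econ] by (simp add: f_def)
  qed
  then obtain j where j: "q j < f j" by blast
  have ij: "j \<noteq> i" using j lt by auto
  define e where "e = min (q i - f i) (f j - q j)"
  have e0: "e > 0" using lt j by (simp add: e_def)
  have sj: "strict (R j) (ereal (f j - e)) (ereal (f j))"
    using sp_strict2[OF sp[of j], of "f j - e" "f j"] e0 q0[of j] Pq[of j] by (simp add: e_def)
  have si: "R i (ereal (f i + e)) (ereal (f i))"
    using sp_strict1[OF sp[of i] nn[of i], of "f i + e"] e0 Pq[of i] by (simp add: strict_def e_def)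
  have e3: "e \<le> f j" using q0[of j] j unfolding e_def by linarith
  show False using transfer[OF rule eff econ ij e0 _ sj[unfolded f_def] si[unfolded f_def]] e3
    by (simp add: f_def)
qed

lemma converse:
  fixes \<phi> :: "('n::finite) rule"
  assumes rule: "is_rule \<phi>" and opo: "own_peak_only \<phi>" and eff: "efficient \<phi>"
    and edg: "equal_division_guarantee \<phi>" and nom: "NOM \<phi>"
  shows "simple_rule \<phi>"
  unfolding simple_rule_def
proof (intro conjI allI impI)
  show "own_peak_only \<phi>" by (rule opo)
  fix R :: "'n \<Rightarrow> pref" and \<Omega> assume econ: "economy R \<Omega>"
  define c where "c = \<Omega> / real CARD('n)"
  define f where "f = \<phi> R \<Omega>"
  define z where "z = zexc R \<Omega>"
  define S where "S = simple_agents R \<Omega>"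
  have c0: "c > 0" using c_pos[OF econ] by (simp add: c_def)
  have sp: "\<And>k. single_peaked (R k)" using econ by (simp add: economy_def)
  have nn: "\<And>k. 0 \<le> f k" using rule_nn[OF rule econ] by (simp add: f_def)
  have k1: "\<And>i. z \<ge> 0 \<Longrightarrow> ereal (f i) \<le> peak (R i)"
    using eff_ge[OF rule eff econ] by (simp add: z_def f_def)
  have k2: "\<And>i. z \<le> 0 \<Longrightarrow> peak (R i) \<le> ereal (f i)"
    using eff_le[OF rule eff econ] by (simp add: z_def f_def)
  have core': "\<And>i Q. single_peaked Q \<Longrightarrow> peak Q = peak (R i) \<Longrightarrow> strict Q (ereal c) (ereal (f i)) \<Longrightarrow> False"
    using core[OF rule opo edg nom econ] by (simp add: c_def f_def)
  have k3: "c \<le> f i" if "ereal c \<le> peak (R i)" for i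
  proof (rule ccontr)
    assume "\<not> c \<le> f i"
    then have "strict (R i) (ereal c) (ereal (f i))"
      using sp_strict1[OF sp nn, of i c] that by simp
    then show False using core'[OF sp] by blast
  qed
  have k4: "f i \<le> c" if "peak (R i) \<le> ereal c" for i
  proof (rule ccontr)
    assume "\<not> f i \<le> c"
    then have "strict (R i) (ereal c) (ereal (f i))"
      using sp_strict2[OF sp _ that, of "f i"] c0 by simp
    then show False using core'[OF sp] by blast
  qed
  have k5: "f i = c" if "peak (R i) = ereal c" for i
    using edg_exact[OF rule edg econ that[unfolded c_def]] by (simp add: f_def c_def)
  have k6: "ereal (f i) = peak (R i)" if "i \<in> S" for i
  proof -
    have "(z \<ge> 0 \<and> peak (R i) < ereal c) \<or> (z \<le> 0 \<and> peak (R i) > ereal c)"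
      using that by (simp add: S_def simple_agents_def z_def c_def)
    then show ?thesis
    proof
      assume h: "z \<ge> 0 \<and> peak (R i) < ereal c"
      then obtain p where p: "peak (R i) = ereal p" using sp_peak_nn[OF sp[of i]] by (cases "peak (R i)") auto
      have pc: "p < c" "0 \<le> p" using h p sp_peak_nn[OF sp[of i]] by auto
      have fp: "f i \<le> p" using k1[of i] h p by simp
      show ?thesis
      proof (rule ccontr)
        assume "ereal (f i) \<noteq> peak (R i)"
        then have fl: "f i < p" using fp p by auto
        define a where "a = (c - p) / (p - f i) + 1"
        have "0 < (c - p) / (p - f i)" using pc fl by (intro divide_pos_pos) auto
        then have a0: "a > 0" by (simp add: a_def)
        have "a * (p - f i) = c - p + (p - f i)" using fl by (simp add: a_def field_simps)
        then have lt: "c - p < a * (p - f i)" using fl by simp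
        have Q: "single_peaked (mk a 1 p)" "peak (mk a 1 p) = ereal p" using mk_sp[OF a0 _ pc(2)] by auto
        have "strict (mk a 1 p) (ereal c) (ereal (f i))"
          using lt pc fl nn[of i] c0 by (simp add: strict_def mk_def Xsp_def dd_real)
        then show False using core'[OF Q(1), of i] Q(2) p by simp
      qed
    next
      assume h: "z \<le> 0 \<and> peak (R i) > ereal c"
      have "peak (R i) \<noteq> \<infinity>" using zexc_le_fin[OF econ] h by (simp add: z_def)
      then obtain p where p: "peak (R i) = ereal p" using sp_peak_nn[OF sp[of i]] by (cases "peak (R i)") auto
      have pc: "c < p" "0 \<le> p" using h p sp_peak_nn[OF sp[of i]] by auto
      have fp: "p \<le> f i" using k2[of i] h p by simp
      show ?thesis
      proof (rule ccontr)
        assume "ereal (f i) \<noteq> peak (R i)"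
        then have fl: "p < f i" using fp p by auto
        define b where "b = (p - c) / (f i - p) + 1"
        have "0 < (p - c) / (f i - p)" using pc fl by (intro divide_pos_pos) auto
        then have b0: "b > 0" by (simp add: b_def)
        have "b * (f i - p) = p - c + (f i - p)" using fl by (simp add: b_def field_simps)
        then have lt: "p - c < b * (f i - p)" using fl by simp
        have Q: "single_peaked (mk 1 b p)" "peak (mk 1 b p) = ereal p" using mk_sp[OF _ b0 pc(2)] by auto
        have "strict (mk 1 b p) (ereal c) (ereal (f i))"
          using lt pc fl nn[of i] c0 by (simp add: strict_def mk_def Xsp_def dd_real)
        then show False using core'[OF Q(1), of i] Q(2) p by simp
      qed
    qed
  qed
  define \<nu> where "\<nu> i = (if z \<ge> 0 then f i - c else c - f i)" for i
  have A: "0 \<le> \<nu> i \<and> ereal (\<nu> i) \<le> \<bar>peak (R i) - ereal c\<bar>" if "i \<notin> S" for i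
  proof (cases "z \<ge> 0")
    case True
    then have pc: "ereal c \<le> peak (R i)" using that by (auto simp: S_def simple_agents_def z_def c_def)
    have "c \<le> f i" using k3[OF pc] .
    moreover have "ereal (f i) \<le> peak (R i)" using k1 True by blast
    ultimately show ?thesis using pc True by (cases "peak (R i)") (auto simp: \<nu>_def)
  next
    case False
    then have z0: "z \<le> 0" by simp
    then have pc: "peak (R i) \<le> ereal c" using that by (auto simp: S_def simple_agents_def z_def c_def)
    have "f i \<le> c" using k4[OF pc] .
    moreover have "peak (R i) \<le> ereal (f i)" using k2 z0 by blast
    ultimately show ?thesis using pc False by (cases "peak (R i)") (auto simp: \<nu>_def)
  qed
  have C: "(i \<in> S \<longrightarrow> ereal (f i) = peak (R i)) \<and>
           (i \<notin> S \<and> z \<ge> 0 \<longrightarrow> f i = c + \<nu> i) \<and>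
           (i \<notin> S \<and> z \<le> 0 \<longrightarrow> f i = c - \<nu> i)" for i
  proof (intro conjI impI)
    show "i \<in> S \<Longrightarrow> ereal (f i) = peak (R i)" by (rule k6)
    show "f i = c + \<nu> i" if "i \<notin> S \<and> z \<ge> 0" using that by (simp add: \<nu>_def)
    show "f i = c - \<nu> i" if h: "i \<notin> S \<and> z \<le> 0"
    proof (cases "z \<ge> 0")
      case True
      then have "peak (R i) = ereal c" using h by (auto simp: S_def simple_agents_def z_def c_def)
      then show ?thesis using k5 True by (simp add: \<nu>_def)
    next
      case False then show ?thesis by (simp add: \<nu>_def)
    qed
  qed
  have B: "ereal (\<Sum>j\<in>UNIV - S. \<nu> j) = Eexc R \<Omega>"
  proof -
    define N where "N = UNIV - S"
    have sumS: "(\<Sum>j\<in>S. peak (R j)) = ereal (\<Sum>j\<in>S. f j)"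
      using k6 by (simp add: sum_ereal[symmetric] del: sum_ereal) 
    have tot: "(\<Sum>j\<in>S. f j) + (\<Sum>j\<in>N. f j) = \<Omega>"
      using rule_sum[OF rule econ] sum.subset_diff[of S UNIV f] by (simp add: N_def f_def)
    have cN: "(\<Sum>j\<in>N. c) = real (card N) * c" by simp
    define D where "D = \<Omega> - ((\<Sum>j\<in>S. f j) + real (card N) * c)"
    have E: "Eexc R \<Omega> = ereal \<bar>D\<bar>"
      unfolding Eexc_def D_def using sumS by (simp add: S_def[symmetric] N_def[symmetric] c_def)
    have nun: "0 \<le> (\<Sum>j\<in>N. \<nu> j)" using A by (intro sum_nonneg) (auto simp: N_def)
    show ?thesis
    proof (cases "z \<ge> 0")
      case True
      then have "(\<Sum>j\<in>N. \<nu> j) = (\<Sum>j\<in>N. f j) - real (card N) * c"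
        by (simp add: \<nu>_def sum_subtractf)
      then have "(\<Sum>j\<in>N. \<nu> j) = D" using tot by (simp add: D_def)
      then show ?thesis using E nun by (simp add: N_def)
    next
      case False
      then have "(\<Sum>j\<in>N. \<nu> j) = real (card N) * c - (\<Sum>j\<in>N. f j)"
        by (simp add: \<nu>_def sum_subtractf)
      then have "(\<Sum>j\<in>N. \<nu> j) = - D" using tot by (simp add: D_def)
      then show ?thesis using E nun by (simp add: N_def)
    qed
  qed
  show "\<exists>\<nu> :: 'n \<Rightarrow> real.
         (\<forall>i\<in>UNIV - simple_agents R \<Omega>. 0 \<le> \<nu> i \<and>
              ereal (\<nu> i) \<le> \<bar>peak (R i) - ereal (\<Omega> / real CARD('n))\<bar>) \<and>
         ereal (\<Sum>j\<in>UNIV - simple_agents R \<Omega>. \<nu> j) = Eexc R \<Omega> \<and>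
         (\<forall>i. (i \<in> simple_agents R \<Omega> \<longrightarrow> ereal (\<phi> R \<Omega> i) = peak (R i)) \<and>
              (i \<notin> simple_agents R \<Omega> \<and> zexc R \<Omega> \<ge> 0 \<longrightarrow>
                  \<phi> R \<Omega> i = \<Omega> / real CARD('n) + \<nu> i) \<and>
              (i \<notin> simple_agents R \<Omega> \<and> zexc R \<Omega> \<le> 0 \<longrightarrow>
                  \<phi> R \<Omega> i = \<Omega> / real CARD('n) - \<nu> i))"
    using A B C unfolding S_def f_def z_def c_def by blast
qed

lemma simple_props:
  fixes \<phi> :: "('n::finite) rule"
  assumes rule: "is_rule \<phi>" and sr: "simple_rule \<phi>" and econ: "economy R \<Omega>"
  shows "zexc R \<Omega> \<ge> 0 \<Longrightarrow> ereal (\<phi> R \<Omega> i) \<le> peak (R i)"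
    and "zexc R \<Omega> \<le> 0 \<Longrightarrow> peak (R i) \<le> ereal (\<phi> R \<Omega> i)"
    and "(peak (R i) \<le> ereal (\<phi> R \<Omega> i) \<and> \<phi> R \<Omega> i \<le> \<Omega> / real CARD('n)) \<or>
         (\<Omega> / real CARD('n) \<le> \<phi> R \<Omega> i \<and> ereal (\<phi> R \<Omega> i) \<le> peak (R i))"
    and "peak (R i) = ereal (\<Omega> / real CARD('n)) \<Longrightarrow> \<phi> R \<Omega> i = \<Omega> / real CARD('n)"
proof -
  define c where "c = \<Omega> / real CARD('n)"
  define f where "f = \<phi> R \<Omega>"
  define z where "z = zexc R \<Omega>"
  define S where "S = simple_agents R \<Omega>"
  obtain \<nu> :: "'n \<Rightarrow> real" where
    A: "\<forall>i\<in>UNIV - S. 0 \<le> \<nu> i \<and> ereal (\<nu> i) \<le> \<bar>peak (R i) - ereal c\<bar>" and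
    C: "\<forall>i. (i \<in> S \<longrightarrow> ereal (f i) = peak (R i)) \<and>
              (i \<notin> S \<and> z \<ge> 0 \<longrightarrow> f i = c + \<nu> i) \<and>
              (i \<notin> S \<and> z \<le> 0 \<longrightarrow> f i = c - \<nu> i)"
    using sr econ unfolding simple_rule_def S_def f_def z_def c_def by blast
  have G: "ereal c \<le> peak (R i) \<and> c \<le> f i \<and> ereal (f i) \<le> peak (R i)" if "i \<notin> S" "z \<ge> 0" for i
  proof -
    have pc: "ereal c \<le> peak (R i)" using that by (auto simp: S_def simple_agents_def z_def c_def)
    have "f i = c + \<nu> i" "0 \<le> \<nu> i" "ereal (\<nu> i) \<le> \<bar>peak (R i) - ereal c\<bar>" using A C that by auto
    then show ?thesis using pc by (cases "peak (R i)") auto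
  qed
  have L: "peak (R i) \<le> ereal c \<and> f i \<le> c \<and> peak (R i) \<le> ereal (f i)" if "i \<notin> S" "z \<le> 0" for i
  proof -
    have pc: "peak (R i) \<le> ereal c" using that by (auto simp: S_def simple_agents_def z_def c_def)
    have "f i = c - \<nu> i" "0 \<le> \<nu> i" "ereal (\<nu> i) \<le> \<bar>peak (R i) - ereal c\<bar>" using A C that by auto
    then show ?thesis using pc by (cases "peak (R i)") auto
  qed
  have Sp: "ereal (f i) = peak (R i)" if "i \<in> S" for i using C that by blast
  show "zexc R \<Omega> \<ge> 0 \<Longrightarrow> ereal (\<phi> R \<Omega> i) \<le> peak (R i)"
    using G[of i] Sp[of i] by (cases "i \<in> S") (auto simp: f_def z_def)
  show "zexc R \<Omega> \<le> 0 \<Longrightarrow> peak (R i) \<le> ereal (\<phi> R \<Omega> i)"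
    using L[of i] Sp[of i] by (cases "i \<in> S") (auto simp: f_def z_def)
  show "(peak (R i) \<le> ereal (\<phi> R \<Omega> i) \<and> \<phi> R \<Omega> i \<le> \<Omega> / real CARD('n)) \<or>
         (\<Omega> / real CARD('n) \<le> \<phi> R \<Omega> i \<and> ereal (\<phi> R \<Omega> i) \<le> peak (R i))"
  proof (cases "i \<in> S")
    case True
    then show ?thesis using Sp[of i] by (auto simp: f_def c_def)
  next
    case False
    have "z \<ge> 0 \<or> z \<le> 0" by auto
    then show ?thesis using G[OF False] L[OF False] unfolding f_def c_def by blast
  qed
  show "peak (R i) = ereal (\<Omega> / real CARD('n)) \<Longrightarrow> \<phi> R \<Omega> i = \<Omega> / real CARD('n)"
  proof -
    assume h: "peak (R i) = ereal (\<Omega> / real CARD('n))"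
    show ?thesis
    proof (cases "i \<in> S")
      case True
      then show ?thesis using Sp[of i] h by (simp add: f_def)
    next
      case False
      have "z \<ge> 0 \<or> z \<le> 0" by auto
      then show ?thesis using G[OF False] L[OF False] h unfolding f_def c_def by auto
    qed
  qed
qed

lemma simple_ed:
  fixes \<phi> :: "('n::finite) rule"
  assumes rule: "is_rule \<phi>" and sr: "simple_rule \<phi>" and econ: "economy R \<Omega>"
    and others: "\<forall>j. j \<noteq> i \<longrightarrow> peak (R j) = ereal (\<Omega> / real CARD('n))"
  shows "\<phi> R \<Omega> i = \<Omega> / real CARD('n)"
proof -
  define c where "c = \<Omega> / real CARD('n)"
  define f where "f = \<phi> R \<Omega>"
  define z where "z = zexc R \<Omega>"
  define S where "S = simple_agents R \<Omega>"
  define n where "n = CARD('n)"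
  have n0: "n \<ge> 1" by (simp add: n_def Suc_leI)
  have Om: "\<Omega> = real n * c" using n0 by (simp add: c_def n_def)
  have sp: "\<And>k. single_peaked (R k)" using econ by (simp add: economy_def)
  obtain \<nu> :: "'n \<Rightarrow> real" where
    A: "\<forall>i\<in>UNIV - S. 0 \<le> \<nu> i \<and> ereal (\<nu> i) \<le> \<bar>peak (R i) - ereal c\<bar>" and
    B: "ereal (\<Sum>j\<in>UNIV - S. \<nu> j) = Eexc R \<Omega>" and
    C: "\<forall>i. (i \<in> S \<longrightarrow> ereal (f i) = peak (R i)) \<and>
              (i \<notin> S \<and> z \<ge> 0 \<longrightarrow> f i = c + \<nu> i) \<and>
              (i \<notin> S \<and> z \<le> 0 \<longrightarrow> f i = c - \<nu> i)"
    using sr econ unfolding simple_rule_def S_def f_def z_def c_def by blast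
  have zr: "z = ereal (r - c)" if r: "peak (R i) = ereal r" for r
  proof -
    have fin: "\<forall>j. peak (R j) \<noteq> \<infinity>" using others r by (metis PInfty_neq_ereal(1))
    have "(\<Sum>j\<in>UNIV. real_of_ereal (peak (R j))) = real_of_ereal (peak (R i)) + (\<Sum>j\<in>UNIV - {i}. real_of_ereal (peak (R j)))"
      by (simp add: sum.remove)
    also have "(\<Sum>j\<in>UNIV - {i}. real_of_ereal (peak (R j))) = (\<Sum>j\<in>UNIV - {i}. c)"
      using others by (intro sum.cong) (auto simp: c_def)
    also have "\<dots> = real (n - 1) * c" by (simp add: n_def card_Diff_singleton)
    finally have "(\<Sum>j\<in>UNIV. real_of_ereal (peak (R j))) - \<Omega> = r - c"
      using r n0 Om by (simp add: of_nat_diff algebra_simps)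
    then show ?thesis using zexc_fin[OF econ fin] by (simp add: z_def)
  qed
  have Se: "S = {}"
  proof -
    have "j \<notin> S" for j
    proof (cases "j = i")
      case False
      then show ?thesis using others by (auto simp: S_def simple_agents_def c_def)
    next
      case True
      have "\<not> (z \<ge> 0 \<and> peak (R i) < ereal c)"
      proof
        assume h: "z \<ge> 0 \<and> peak (R i) < ereal c"
        then obtain r where r: "peak (R i) = ereal r" using sp_peak_nn[OF sp[of i]] by (cases "peak (R i)") auto
        then show False using h zr[OF r] by simp linarith
      qed
      moreover have "\<not> (z \<le> 0 \<and> peak (R i) > ereal c)"
      proof
        assume h: "z \<le> 0 \<and> peak (R i) > ereal c"
        then have "peak (R i) \<noteq> \<infinity>" using zexc_le_fin[OF econ] by (simp add: z_def)
        then obtain r where r: "peak (R i) = ereal r" using h by (cases "peak (R i)") auto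
        then show False using h zr[OF r] by simp linarith
      qed
      ultimately show ?thesis using True by (auto simp: S_def simple_agents_def z_def c_def)
    qed
    then show ?thesis by blast
  qed
  have Se': "simple_agents R \<Omega> = {}" using Se by (simp add: S_def)
  have "Eexc R \<Omega> = \<bar>ereal \<Omega> - (0 + ereal (real CARD('n) * (\<Omega> / real CARD('n))))\<bar>"
    unfolding Eexc_def Se' by simp
  also have "\<dots> = 0" by simp
  finally have "Eexc R \<Omega> = 0" .
  then have s0: "(\<Sum>j\<in>UNIV. \<nu> j) = 0" using B Se by simp
  have "\<nu> i = 0" using s0 A Se by (simp add: sum_nonneg_eq_0_iff)
  moreover have "z \<ge> 0 \<or> z \<le> 0" by auto
  ultimately have "f i = c" using C Se by auto
  then show ?thesis by (simp add: f_def c_def)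
qed

lemma forward:
  fixes \<phi> :: "('n::finite) rule"
  assumes rule: "is_rule \<phi>" and sr: "simple_rule \<phi>"
  shows "own_peak_only \<phi> \<and> efficient \<phi> \<and> equal_division_guarantee \<phi> \<and> NOM \<phi>"
proof (intro conjI)
  show "own_peak_only \<phi>" using sr by (simp add: simple_rule_def)
  show "efficient \<phi>"
    unfolding efficient_def
  proof (intro allI impI notI)
    fix R :: "'n \<Rightarrow> pref" and \<Omega>
    assume econ: "economy R \<Omega>"
    assume "\<exists>x :: 'n \<Rightarrow> real. (\<forall>j. x j \<ge> 0) \<and> (\<Sum>j\<in>UNIV. x j) = \<Omega> \<and>
            (\<forall>i. R i (ereal (x i)) (ereal (\<phi> R \<Omega> i))) \<and>
            (\<exists>i. strict (R i) (ereal (x i)) (ereal (\<phi> R \<Omega> i)))"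
    then obtain x :: "'n \<Rightarrow> real" and i where x0: "\<forall>j. x j \<ge> 0" and xs: "(\<Sum>j\<in>UNIV. x j) = \<Omega>"
      and xR: "\<forall>k. R k (ereal (x k)) (ereal (\<phi> R \<Omega> k))"
      and st: "strict (R i) (ereal (x i)) (ereal (\<phi> R \<Omega> i))" by blast
    have sp: "\<And>k. single_peaked (R k)" using econ by (simp add: economy_def)
    have nn: "\<And>k. 0 \<le> \<phi> R \<Omega> k" using rule_nn[OF rule econ] .
    have fs: "(\<Sum>j\<in>UNIV. \<phi> R \<Omega> j) = \<Omega>" using rule_sum[OF rule econ] .
    have "x i = \<phi> R \<Omega> i"
    proof (cases "zexc R \<Omega> \<ge> 0")
      case True
      have le: "\<phi> R \<Omega> k \<le> x k" for k
      proof (rule ccontr)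
        assume "\<not> ?thesis"
        then have "strict (R k) (ereal (\<phi> R \<Omega> k)) (ereal (x k))"
          using sp_strict1[OF sp x0[rule_format, of k]] simple_props(1)[OF rule sr econ True, of k] by simp
        then show False using xR by (simp add: strict_def)
      qed
      show ?thesis
      proof (rule ccontr)
        assume "x i \<noteq> \<phi> R \<Omega> i"
        then have "\<phi> R \<Omega> i < x i" using le[of i] by linarith
        then have "(\<Sum>j\<in>UNIV. \<phi> R \<Omega> j) < (\<Sum>j\<in>UNIV. x j)"
          using le by (intro sum_strict_mono_ex1) auto
        then show False using fs xs by simp
      qed
    next
      case False
      then have z: "zexc R \<Omega> \<le> 0" by simp
      have le: "x k \<le> \<phi> R \<Omega> k" for k
      proof (rule ccontr)
        assume "\<not> ?thesis"
        then have "strict (R k) (ereal (\<phi> R \<Omega> k)) (ereal (x k))"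
          using sp_strict2[OF sp nn, of k] simple_props(2)[OF rule sr econ z, of k] by simp
        then show False using xR by (simp add: strict_def)
      qed
      show ?thesis
      proof (rule ccontr)
        assume "x i \<noteq> \<phi> R \<Omega> i"
        then have "x i < \<phi> R \<Omega> i" using le[of i] by linarith
        then have "(\<Sum>j\<in>UNIV. x j) < (\<Sum>j\<in>UNIV. \<phi> R \<Omega> j)"
          using le by (intro sum_strict_mono_ex1) auto
        then show False using fs xs by simp
      qed
    qed
    then show False using st by (simp add: strict_def)
  qed
  show "equal_division_guarantee \<phi>"
    unfolding equal_division_guarantee_def
  proof (intro allI impI)
    fix R :: "'n \<Rightarrow> pref" and \<Omega> i
    assume econ: "economy R \<Omega>" and p: "peak (R i) = ereal (\<Omega> / real CARD('n))"
    have sp: "single_peaked (R i)" using econ by (simp add: economy_def)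
    have e: "\<phi> R \<Omega> i = \<Omega> / real CARD('n)" using simple_props(4)[OF rule sr econ p] .
    have "0 \<le> \<Omega> / real CARD('n)" using econ by (simp add: economy_def)
    then show "indiff (R i) (ereal (\<phi> R \<Omega> i)) (ereal (\<Omega> / real CARD('n)))"
      unfolding e indiff_def using sp_refl[OF sp] by simp
  qed
  show "NOM \<phi>"
    unfolding NOM_def
  proof (intro allI impI notI)
    fix i Ri Ri' and \<Omega> :: real
    assume spi: "single_peaked Ri" and spi': "single_peaked Ri'" and Om: "\<Omega> > 0"
    assume om: "obvious_manipulation \<phi> i Ri \<Omega> Ri'"
    define c where "c = \<Omega> / real CARD('n)"
    have c0: "c > 0" using Om by (simp add: c_def)
    define R0 where "R0 = (\<lambda>j. mk 1 1 c)(i := Ri')"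
    have mks: "single_peaked (mk 1 1 c)" "peak (mk 1 1 c) = ereal c" using mk_sp[of 1 1 c] c0 by auto
    have allsp0: "\<forall>j. single_peaked (R0 j)" using mks spi' by (simp add: R0_def)
    then have e0: "economy R0 \<Omega>" using Om by (simp add: economy_def)
    have "\<phi> R0 \<Omega> i = c"
      using simple_ed[OF rule sr e0] mks by (simp add: R0_def c_def)
    then have "c \<in> option_set \<phi> i Ri' \<Omega>"
      unfolding option_set_def using allsp0 by (auto simp: R0_def intro!: exI[of _ R0])
    then obtain x where x: "x \<in> option_set \<phi> i Ri \<Omega>" and st: "strict Ri (ereal c) (ereal x)"
      using om unfolding obvious_manipulation_def c_def by blast
    then obtain R where R: "\<forall>j. single_peaked (R j)" "R i = Ri" "x = \<phi> R \<Omega> i"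
      by (auto simp: option_set_def)
    have econ: "economy R \<Omega>" using R Om by (simp add: economy_def)
    have x0: "0 \<le> x" using rule_nn[OF rule econ] R by simp
    have btw: "(peak Ri \<le> ereal x \<and> x \<le> c) \<or> (c \<le> x \<and> ereal x \<le> peak Ri)"
      using simple_props(3)[OF rule sr econ, of i] R by (simp add: c_def)
    have "Ri (ereal x) (ereal c)"
    proof (cases "x = c")
      case True then show ?thesis using sp_refl[OF spi] x0 by simp
    next
      case False
      then show ?thesis using btw sp_strict2[OF spi x0, of c] sp_strict1[OF spi, of c x] c0
        by (auto simp: strict_def)
    qed
    then show False using st by (simp add: strict_def)
  qed
qed

theorem theorem2:
  fixes \<phi> :: "('n::finite) rule"
  assumes "is_rule \<phi>"
  shows "(own_peak_only \<phi> \<and> efficient \<phi> \<and> equal_division_guarantee \<phi> \<and> NOM \<phi>)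
         \<longleftrightarrow> simple_rule \<phi>"
  using forward[OF assms] converse[OF assms] by blast

end
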